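(* Let $n,k,l$ be nonnegative integers with $k+l\le n$, let $\alpha,\beta>-1$, set $\sigma=\alpha+\beta+1$, and for $i=k+l,\ldots,n$ and $h=k,\ldots,n-l$ define \[ c_{ih}=\frac{(\alpha+2l+1)_{i-k-l}}{(i-k-l)!}\binom{n}{h}^{-1}\binom{n-k-l}{h-k}\,Q_{i-k-l}(n-l-h;\,\alpha+2l,\,\beta+2k,\,n-k-l). \] Then for each fixed $i$ (and whenever the indices involved lie in the range $k\le h\le n-l$): \[ c_{i,n-l}=\frac{(\alpha+2l+1)_{i-k-l}}{(i-k-l)!}\binom{n}{l}^{-1}, \] \[ c_{i,n-l-1}=c_{i,n-l}\,\frac{(n-k-l)(l+1)}{n-l}\left[1-\frac{(k+l-i)(i+k+l+\sigma)}{(k+l-n)(\alpha+2l+1)}\right], \] and for $h=n-l-2,n-l-3,\ldots,k$, \[ c_{ih}=F_i(h)\,c_{i,h+1}+G(h)\,c_{i,h+2}, \] where \[ H(h)=\frac{(n-l-h-1)(h+k+\beta+2)}{(n+l+\alpha-h)(k-h-1)}, \] \[ F_i(h)=\frac{(n-h)(h+1-k)}{(n-l-h)(h+1)}\left[1-H(h)-\frac{(k+l-i)(i+k+l+\sigma)}{(n+l+\alpha-h)(k-h-1)}\right], \] \[ G(h)=\frac{(n-h-1)_2\,(h+1-k)_2}{(n-l-h-1)_2\,(h+1)_2}\,H(h). \]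
   Context: Pochhammer symbol: $(a)_0=1$, $(a)_j=a(a+1)\cdots(a+j-1)$. Hahn polynomials: for a nonnegative integer $N$, $a,b>-1$ and $m=0,1,\ldots,N$, $Q_m(x;a,b,N)=\sum_{j=0}^m\frac{(-m)_j(m+a+b+1)_j(-x)_j}{j!\,(a+1)_j\,(-N)_j}$. (The numbers $c_{ih}$ are the coefficients of the modified Jacobi polynomial $J_{i,k,l}^{(\alpha,\beta)}(x)=(1-x)^lx^kR^{(\alpha+2l,\beta+2k)}_{i-k-l}(x)$ in the Bernstein basis $B^n_h(x)=\binom nh x^h(1-x)^{n-h}$, $h=k,\ldots,n-l$, where $R^{(a,b)}_m(x)=\frac{(a+1)_m}{m!}\sum_{j=0}^m\frac{(-m)_j(m+a+b+1)_j}{j!(a+1)_j}(1-x)^j$.) *)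

theory Defs
  imports Complex_Main
begin

definition hahnQ :: "nat \<Rightarrow> real \<Rightarrow> real \<Rightarrow> real \<Rightarrow> nat \<Rightarrow> real" where
  "hahnQ m x a b N =
     (\<Sum>j\<le>m. pochhammer (- real m) j * pochhammer (real m + a + b + 1) j * pochhammer (- x) j
              / (fact j * pochhammer (a + 1) j * pochhammer (- real N) j))"

text \<open>The coefficients c_{ih}; meaningful for k+l \<le> i \<le> n and k \<le> h \<le> n-l.\<close>
definition cc :: "real \<Rightarrow> real \<Rightarrow> nat \<Rightarrow> nat \<Rightarrow> nat \<Rightarrow> nat \<Rightarrow> nat \<Rightarrow> real" where
  "cc \<alpha> \<beta> n k l i h =
     pochhammer (\<alpha> + 2 * real l + 1) (i - k - l) / fact (i - k - l)
     * (1 / real (n choose h)) * real ((n - k - l) choose (h - k))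
     * hahnQ (i - k - l) (real (n - l - h)) (\<alpha> + 2 * real l) (\<beta> + 2 * real k) (n - k - l)"

definition HH :: "real \<Rightarrow> real \<Rightarrow> nat \<Rightarrow> nat \<Rightarrow> nat \<Rightarrow> nat \<Rightarrow> real" where
  "HH \<alpha> \<beta> n k l h =
     (real n - real l - real h - 1) * (real h + real k + \<beta> + 2)
     / ((real n + real l + \<alpha> - real h) * (real k - real h - 1))"

definition FF :: "real \<Rightarrow> real \<Rightarrow> nat \<Rightarrow> nat \<Rightarrow> nat \<Rightarrow> nat \<Rightarrow> nat \<Rightarrow> real" where
  "FF \<alpha> \<beta> n k l i h =
     (real n - real h) * (real h + 1 - real k) / ((real n - real l - real h) * (real h + 1))
     * (1 - HH \<alpha> \<beta> n k l h
          - (real k + real l - real i) * (real i + real k + real l + (\<alpha> + \<beta> + 1))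
            / ((real n + real l + \<alpha> - real h) * (real k - real h - 1)))"

definition GG :: "real \<Rightarrow> real \<Rightarrow> nat \<Rightarrow> nat \<Rightarrow> nat \<Rightarrow> nat \<Rightarrow> real" where
  "GG \<alpha> \<beta> n k l h =
     pochhammer (real n - real h - 1) 2 * pochhammer (real h + 1 - real k) 2
     / (pochhammer (real n - real l - real h - 1) 2 * pochhammer (real h + 1) 2)
     * HH \<alpha> \<beta> n k l h"

end

theory Submission
  imports Defs
begin


definition hA :: "nat \<Rightarrow> real \<Rightarrow> real \<Rightarrow> nat \<Rightarrow> nat \<Rightarrow> real" where
  "hA m a b N j = pochhammer (- real m) j * pochhammer (real m + a + b + 1) j
     / (fact j * pochhammer (a + 1) j * pochhammer (- real N) j)"

lemma hahnQ_alt: "hahnQ m x a b N = (\<Sum>j\<le>m. hA m a b N j * pochhammer (- x) j)"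
  unfolding hahnQ_def hA_def by (rule sum.cong) auto

lemma term_id:
  fixes x a b :: real
  shows "(x+a+1)*(x-real N)*(pochhammer (-(x+1)) j - pochhammer (-x) j)
        - x*(x-b-real N-1)*(pochhammer (-x) j - pochhammer (-(x-1)) j)
        = real j*(real j+a+b+1)*pochhammer (-x) j
          + real j*(a+real j)*(real N - real j + 1)*pochhammer (-x) (j-1)"
proof (cases j)
  case 0 then show ?thesis by simp
next
  case (Suc i)
  define P where "P = pochhammer (-x) i"
  have e1: "pochhammer (-(x+1)) (Suc i) = (-x-1) * P"
    unfolding P_def by (simp add: pochhammer_rec algebra_simps)
  have e2: "pochhammer (-x) (Suc i) = (-x + real i) * P"
    unfolding P_def by (simp add: pochhammer_rec')
  have e3: "x * pochhammer (-(x-1)) (Suc i) = x * (1 - x + real i) * pochhammer (1-x) i"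
    by (simp add: pochhammer_rec' algebra_simps)
  have e4: "x * pochhammer (1-x) i = - (-x + real i) * P"
  proof -
    have "pochhammer (-x) (Suc i) = (-x) * pochhammer (-x+1) i" by (simp add: pochhammer_rec)
    then show ?thesis using e2 by (simp add: algebra_simps)
  qed
  have e5: "x * pochhammer (-(x-1)) (Suc i) = (1 - x + real i) * (- (-x + real i) * P)"
  proof -
    have "x * pochhammer (-(x-1)) (Suc i) = x * pochhammer (1-x) (Suc i)" by simp
    also have "\<dots> = (1 - x + real i) * (x * pochhammer (1-x) i)"
      by (simp only: pochhammer_rec' mult_ac)
    also have "\<dots> = (1 - x + real i) * (- (-x + real i) * P)" by (simp only: e4)
    finally show ?thesis .
  qed
  have d: "x*(x-b-real N-1)*(pochhammer (-x) (Suc i) - pochhammer (-(x-1)) (Suc i))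
      = (x-b-real N-1)*(x*((-x + real i) * P) - (1 - x + real i) * (- (-x + real i) * P))"
  proof -
    have "x*(x-b-real N-1)*(pochhammer (-x) (Suc i) - pochhammer (-(x-1)) (Suc i))
      = (x-b-real N-1)*(x*pochhammer (-x) (Suc i) - x*pochhammer (-(x-1)) (Suc i))"
      by (simp only: algebra_simps)
    then show ?thesis by (simp only: e2 e5)
  qed
  have "(x+a+1)*(x-real N)*(pochhammer (-(x+1)) (Suc i) - pochhammer (-x) (Suc i))
        - x*(x-b-real N-1)*(pochhammer (-x) (Suc i) - pochhammer (-(x-1)) (Suc i))
      = (x+a+1)*(x-real N)*((-x-1) * P - (-x + real i) * P)
        - (x-b-real N-1)*(x*((-x + real i) * P) - (1 - x + real i) * (- (-x + real i) * P))"
    by (simp only: d, simp only: e1 e2)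
  also have "\<dots> = real (Suc i)*(real (Suc i)+a+b+1)*((-x + real i) * P)
          + real (Suc i)*(a+real (Suc i))*(real N - real (Suc i) + 1)*P"
    by (simp add: algebra_simps)
  finally show ?thesis unfolding Suc using e2 by (simp add: P_def)
qed

lemma hA_step:
  assumes "m \<le> N" "a > -1" "j \<le> m"
  shows "hA m a b N (Suc j) * (real j+1)*(a+real j+1)*(real N - real j)
       = -(real j - real m)*(real j+real m+a+b+1) * hA m a b N j"
proof (cases "j = m")
  case True
  have "pochhammer (- real m) (Suc m) = 0"
    by (subst pochhammer_eq_0_iff) auto
  then show ?thesis using True by (simp add: hA_def)
next
  case False
  then have jm: "j < m" using assms by simp
  have p1: "pochhammer (a+1) j \<noteq> 0"
    using assms(2) by (auto simp: pochhammer_eq_0_iff)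
  have p2: "pochhammer (- real N) j \<noteq> 0"
    using assms jm by (auto simp: pochhammer_eq_0_iff)
  have p3: "a + 1 + real j \<noteq> 0" using assms(2) by simp
  have p4: "real N - real j \<noteq> 0" using assms jm by simp
  have p5: "- real N + real j \<noteq> 0" using assms jm by simp
  have f: "(fact (Suc j) :: real) = (real j + 1) * fact j" by simp
  have fj: "(fact j :: real) \<noteq> 0" by simp
  have e1: "hA m a b N (Suc j) = hA m a b N j * ((- real m + real j)*(real m + a + b + 1 + real j)
          / ((real j + 1) * (a + 1 + real j) * (- real N + real j)))"
    unfolding hA_def f pochhammer_rec' using p1 p2 p3 p5 fj
    by (simp add: field_simps)
  have e2: "((- real m + real j)*(real m + a + b + 1 + real j)
          / ((real j + 1) * (a + 1 + real j) * (- real N + real j))) * ((real j+1)*(a+real j+1)*(real N - real j))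
        = -(real j - real m)*(real j+real m+a+b+1)"
  proof -
    define den where "den = (real j + 1) * (a + 1 + real j) * (- real N + real j)"
    have den: "den \<noteq> 0" unfolding den_def using p3 p5 by simp
    have "(real j+1)*(a+real j+1)*(real N - real j) = - den" unfolding den_def by (simp add: algebra_simps)
    then have "((- real m + real j)*(real m + a + b + 1 + real j) / den) * ((real j+1)*(a+real j+1)*(real N - real j))
       = ((- real m + real j)*(real m + a + b + 1 + real j) / den) * (- den)" by (simp only:)
    also have "\<dots> = - ((- real m + real j)*(real m + a + b + 1 + real j))" using den by simp
    also have "\<dots> = -(real j - real m)*(real j+real m+a+b+1)" by (simp add: algebra_simps)
    finally show ?thesis unfolding den_def .
  qed
  have "hA m a b N (Suc j) * (real j+1)*(a+real j+1)*(real N - real j)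
     = hA m a b N j * (((- real m + real j)*(real m + a + b + 1 + real j)
          / ((real j + 1) * (a + 1 + real j) * (- real N + real j))) * ((real j+1)*(a+real j+1)*(real N - real j)))"
    by (simp only: e1 mult.assoc)
  also have "\<dots> = hA m a b N j * (-(real j - real m)*(real j+real m+a+b+1))" by (simp only: e2)
  finally show ?thesis by (simp add: algebra_simps)
qed

lemma hahn_diff:
  fixes x a b :: real
  assumes "m \<le> N" "a > -1"
  shows "(x+a+1)*(x-real N)*(hahnQ m (x+1) a b N - hahnQ m x a b N)
        - x*(x-b-real N-1)*(hahnQ m x a b N - hahnQ m (x-1) a b N)
        = real m*(real m+a+b+1)*hahnQ m x a b N"
proof -
  define A where "A = hA m a b N"
  define F where "F j = A j * (real j*(a+real j)*(real N - real j + 1)*pochhammer (-x) (j-1))" for j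
  have "(x+a+1)*(x-real N)*(hahnQ m (x+1) a b N - hahnQ m x a b N)
        - x*(x-b-real N-1)*(hahnQ m x a b N - hahnQ m (x-1) a b N)
      = (\<Sum>j\<le>m. A j * ((x+a+1)*(x-real N)*(pochhammer (-(x+1)) j - pochhammer (-x) j)
        - x*(x-b-real N-1)*(pochhammer (-x) j - pochhammer (-(x-1)) j)))"
    unfolding hahnQ_alt A_def
    by (simp add: sum_distrib_left sum_subtractf[symmetric] algebra_simps)
  also have "\<dots> = (\<Sum>j\<le>m. A j * (real j*(real j+a+b+1)*pochhammer (-x) j)) + (\<Sum>j\<le>m. F j)"
    unfolding sum.distrib[symmetric]
  proof (rule sum.cong)
    fix j assume "j \<in> {..m}"
    show "A j * ((x+a+1)*(x-real N)*(pochhammer (-(x+1)) j - pochhammer (-x) j)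
        - x*(x-b-real N-1)*(pochhammer (-x) j - pochhammer (-(x-1)) j))
        = A j * (real j*(real j+a+b+1)*pochhammer (-x) j) + F j"
      by (subst term_id) (simp add: F_def algebra_simps)
  qed simp
  also have "(\<Sum>j\<le>m. F j) = (\<Sum>j\<le>m. -(real j - real m)*(real j+real m+a+b+1) * A j * pochhammer (-x) j)"
  proof -
    have F0: "F 0 = 0" by (simp add: F_def)
    have Fm: "F (Suc m) = 0"
    proof -
      have "pochhammer (- real m) (Suc m) = 0"
        by (subst pochhammer_eq_0_iff) auto
      then show ?thesis by (simp add: F_def A_def hA_def)
    qed
    have "(\<Sum>j\<le>m. F j) = (\<Sum>j\<le>Suc m. F j)" using Fm by simp
    also have "\<dots> = (\<Sum>j\<le>m. F (Suc j))" by (subst sum.atMost_Suc_shift) (simp add: F0)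
    also have "\<dots> = (\<Sum>j\<le>m. -(real j - real m)*(real j+real m+a+b+1) * A j * pochhammer (-x) j)"
    proof (rule sum.cong)
      fix j assume "j \<in> {..m}"
      then have "j \<le> m" by simp
      have "F (Suc j) = (hA m a b N (Suc j) * (real j+1)*(a+real j+1)*(real N - real j)) * pochhammer (-x) j"
        unfolding F_def A_def by (simp add: algebra_simps)
      also have "\<dots> = -(real j - real m)*(real j+real m+a+b+1) * A j * pochhammer (-x) j"
        unfolding hA_step[OF assms \<open>j \<le> m\<close>] A_def ..
      finally show "F (Suc j) = -(real j - real m)*(real j+real m+a+b+1) * A j * pochhammer (-x) j" .
    qed simp
    finally show ?thesis .
  qed
  also have "(\<Sum>j\<le>m. A j * (real j*(real j+a+b+1)*pochhammer (-x) j))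
     + (\<Sum>j\<le>m. -(real j - real m)*(real j+real m+a+b+1) * A j * pochhammer (-x) j)
     = (\<Sum>j\<le>m. real m*(real m+a+b+1) * (A j * pochhammer (-x) j))"
    by (simp add: sum.distrib[symmetric] algebra_simps)
  also have "\<dots> = real m*(real m+a+b+1)*hahnQ m x a b N"
    unfolding hahnQ_alt A_def by (simp add: sum_distrib_left)
  finally show ?thesis .
qed

lemma hahnQ_0: "hahnQ m 0 a b N = 1"
proof -
  have "hahnQ m 0 a b N = (\<Sum>j\<le>m. (if j = 0 then hA m a b N j else 0))"
    unfolding hahnQ_alt by (rule sum.cong) (auto simp: pochhammer_0_left)
  also have "\<dots> = 1" by (simp add: hA_def)
  finally show ?thesis .
qed

lemma hahnQ_1: "hahnQ m 1 a b N = 1 - hA m a b N 1"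
proof (cases m)
  case 0
  have "pochhammer (- real 0) 1 = (0::real)" by simp
  then show ?thesis using 0 unfolding hahnQ_alt by (simp add: hA_def)
next
  case (Suc m')
  have z: "pochhammer (-1::real) j = 0" if "j \<ge> 2" for j
    using that by (subst pochhammer_eq_0_iff) (auto intro!: exI[of _ 1])
  have "hahnQ m 1 a b N = (\<Sum>j\<in>{..1}. hA m a b N j * pochhammer (- 1) j)"
    unfolding hahnQ_alt
    by (rule sum.mono_neutral_right) (use Suc z in auto)
  also have "\<dots> = 1 - hA m a b N 1" by (simp add: hA_def)
  finally show ?thesis .
qed

lemma binom_step_real: "k \<le> n \<Longrightarrow> real (n choose Suc k) * (real k + 1) = (real n - real k) * real (n choose k)"
proof -
  assume "k \<le> n"
  have "Suc k * (n choose Suc k) = (n - k) * (n choose k)"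
    by (metis binomial_absorption binomial_absorb_comp)
  then have "real (Suc k * (n choose Suc k)) = real ((n - k) * (n choose k))" by simp
  then show ?thesis using \<open>k \<le> n\<close> by (simp add: of_nat_diff algebra_simps)
qed

lemma part1:
  assumes "k + l \<le> n"
  shows "cc \<alpha> \<beta> n k l i (n - l) =
           pochhammer (\<alpha> + 2 * real l + 1) (i - k - l) / fact (i - k - l) * (1 / real (n choose l))"
proof -
  have "n choose (n - l) = n choose l" using binomial_symmetric[of l n] assms by simp
  moreover have "n - l - k = n - k - l" by simp
  ultimately show ?thesis unfolding cc_def by (simp add: hahnQ_0)
qed

lemma part2:
  assumes "k + l + 1 \<le> n" "\<alpha> > -1" "k + l \<le> i"
  shows "cc \<alpha> \<beta> n k l i (n - l - 1) =
           cc \<alpha> \<beta> n k l i (n - l) * ((real n - real k - real l) * (real l + 1) / (real n - real l))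
           * (1 - (real k + real l - real i) * (real i + real k + real l + (\<alpha> + \<beta> + 1))
                  / ((real k + real l - real n) * (\<alpha> + 2 * real l + 1)))"
proof -
  define P where "P = pochhammer (\<alpha> + 2 * real l + 1) (i - k - l) / fact (i - k - l)"
  define d0 where "d0 = real (n choose l)"
  have c0: "cc \<alpha> \<beta> n k l i (n - l) = P * (1 / d0)"
    unfolding P_def d0_def using part1[of k l n] assms by simp
  have sym: "n choose (n - l - 1) = n choose Suc l"
    using binomial_symmetric[of "Suc l" n] assms by simp
  have bs: "real (n choose Suc l) * (real l + 1) = (real n - real l) * d0"
    unfolding d0_def by (rule binom_step_real) (use assms in simp)
  have d0pos: "d0 > 0" unfolding d0_def using assms by simp
  have nl: "real n - real l > 0" using assms by simp
  have d1: "real (n choose Suc l) = (real n - real l) * d0 / (real l + 1)"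
    using bs by (simp add: field_simps)
  have bN: "real ((n - k - l) choose (n - l - 1 - k)) = real n - real k - real l"
  proof -
    have "n - l - 1 - k = (n - k - l) - 1" by simp
    moreover have "(n - k - l) choose ((n - k - l) - 1) = n - k - l"
      using binomial_symmetric[of 1 "n-k-l"] assms by simp
    ultimately show ?thesis using assms by (simp add: of_nat_diff)
  qed
  have x1: "real (n - l - (n - l - 1)) = 1" using assms by simp
  have hA1: "hA (i - k - l) (\<alpha> + 2 * real l) (\<beta> + 2 * real k) (n - k - l) 1
     = (real k + real l - real i) * (real i + real k + real l + (\<alpha> + \<beta> + 1))
                  / ((real k + real l - real n) * (\<alpha> + 2 * real l + 1))"
    unfolding hA_def using assms by (simp add: of_nat_diff algebra_simps)
  have "cc \<alpha> \<beta> n k l i (n - l - 1) = P * (1 / real (n choose Suc l)) * (real n - real k - real l)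
     * (1 - hA (i - k - l) (\<alpha> + 2 * real l) (\<beta> + 2 * real k) (n - k - l) 1)"
    unfolding cc_def P_def sym bN x1 hahnQ_1 ..
  also have "\<dots> = P * (1 / d0) * ((real n - real k - real l) * (real l + 1) / (real n - real l))
     * (1 - hA (i - k - l) (\<alpha> + 2 * real l) (\<beta> + 2 * real k) (n - k - l) 1)"
    unfolding d1 using d0pos nl by (simp add: field_simps)
  finally show ?thesis unfolding c0 hA1 .
qed

lemma part3:
  assumes "k + l \<le> n" "\<alpha> > -1" "\<beta> > -1" "k + l \<le> i" "i \<le> n"
    and hk: "k \<le> h" and hn: "h + 2 \<le> n - l"
  shows "cc \<alpha> \<beta> n k l i h =
           FF \<alpha> \<beta> n k l i h * cc \<alpha> \<beta> n k l i (h + 1) + GG \<alpha> \<beta> n k l h * cc \<alpha> \<beta> n k l i (h + 2)"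
proof -
  define m where "m = i - k - l"
  define N where "N = n - k - l"
  define a where "a = \<alpha> + 2 * real l"
  define b where "b = \<beta> + 2 * real k"
  define P where "P = pochhammer (\<alpha> + 2 * real l + 1) (i - k - l) / fact (i - k - l)"
  define xr where "xr = real n - real l - real h"
  define Q0 where "Q0 = hahnQ m xr a b N"
  define Q1 where "Q1 = hahnQ m (xr - 1) a b N"
  define Q2 where "Q2 = hahnQ m (xr - 2) a b N"
  define c0 where "c0 = real (N choose (h - k))"
  define c1 where "c1 = real (N choose (h + 1 - k))"
  define c2 where "c2 = real (N choose (h + 2 - k))"
  define d0 where "d0 = real (n choose h)"
  define d1 where "d1 = real (n choose (h+1))"
  define d2 where "d2 = real (n choose (h+2))"
  have mN: "m \<le> N" unfolding m_def N_def using assms by simp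
  have a1: "a > -1" unfolding a_def using assms by simp
  have xr2: "xr \<ge> 2" unfolding xr_def using hn by linarith
  have rm: "real m = real i - real k - real l" unfolding m_def using assms by (simp add: of_nat_diff)
  have rN: "real N = real n - real k - real l" unfolding N_def using assms by (simp add: of_nat_diff)
  have cc0: "cc \<alpha> \<beta> n k l i h = P * (1 / d0) * c0 * Q0"
    unfolding cc_def P_def d0_def c0_def Q0_def m_def N_def a_def b_def xr_def
    using hn by (simp add: of_nat_diff algebra_simps)
  have cc1: "cc \<alpha> \<beta> n k l i (h+1) = P * (1 / d1) * c1 * Q1"
    unfolding cc_def P_def d1_def c1_def Q1_def m_def N_def a_def b_def xr_def
    using hn by (simp add: of_nat_diff algebra_simps)
  have cc2: "cc \<alpha> \<beta> n k l i (h+2) = P * (1 / d2) * c2 * Q2"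
    unfolding cc_def P_def d2_def c2_def Q2_def m_def N_def a_def b_def xr_def
    using hn by (simp add: of_nat_diff algebra_simps)
  have s1: "c1 * (real (h - k) + 1) = (real N - real (h - k)) * c0"
    unfolding c1_def c0_def using binom_step_real[of "h-k" N] hk hn unfolding N_def
    by (simp add: Suc_diff_le)
  have s2: "c2 * (real (h + 1 - k) + 1) = (real N - real (h + 1 - k)) * c1"
    unfolding c1_def c2_def using binom_step_real[of "h+1-k" N] hk hn unfolding N_def
    by (simp add: Suc_diff_le)
  have s3: "d1 * (real h + 1) = (real n - real h) * d0"
    unfolding d1_def d0_def using binom_step_real[of h n] hn by simp
  have s4: "d2 * (real (h+1) + 1) = (real n - real (h+1)) * d1"
    unfolding d1_def d2_def using binom_step_real[of "h+1" n] hn by simp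
  have d0p: "d0 > 0" unfolding d0_def using hn by simp
  have d1p: "d1 > 0" unfolding d1_def using hn by simp
  have d2p: "d2 > 0" unfolding d2_def using hn by simp
  have hk1: "real (h - k) = real h - real k" using hk by (simp add: of_nat_diff)
  have hk2: "real (h + 1 - k) = real h + 1 - real k" using hk by (simp add: of_nat_diff)
  have e0: "c0 = c1 * (real h + 1 - real k) / xr"
    using s1 xr2 unfolding hk1 rN xr_def by (simp add: field_simps)
  have e0': "d0 = d1 * (real h + 1) / (real n - real h)"
    using s3 hn by (simp add: field_simps)
  have e2: "c2 = c1 * (xr - 1) / (real h + 2 - real k)"
  proof -
    have "real h + 2 - real k > 0" using hk by linarith
    then show ?thesis using s2 unfolding hk2 rN xr_def by (simp add: field_simps)
  qed
  have e2': "d2 = d1 * (real n - real h - 1) / (real h + 2)"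
    using s4 by (simp add: field_simps)
  define K where "K = P * c1 / d1"
  define pre where "pre = (real n - real h) * (real h + 1 - real k) / (xr * (real h + 1))"
  have nh: "real n - real h > 1" using hn by linarith
  have hkp: "real h + 1 - real k > 0" using hk by linarith
  have L0: "cc \<alpha> \<beta> n k l i h = K * pre * Q0"
    unfolding cc0 e0 e0' K_def pre_def using xr2 nh d1p hkp by (simp add: field_simps)
  have L1: "cc \<alpha> \<beta> n k l i (h+1) = K * Q1"
    unfolding cc1 K_def by simp
  define B where "B = (xr + a) * (xr - 1 - real N)"
  define D where "D = (xr - 1) * (xr - b - real N - 2)"
  define lam where "lam = real m * (real m + a + b + 1)"
  have Bnz: "B \<noteq> 0"
  proof -
    have "xr + a > 0" unfolding xr_def a_def using hn assms by linarith
    moreover have "xr - 1 - real N < 0" unfolding xr_def rN using hk by linarith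
    ultimately show ?thesis unfolding B_def by (simp add: mult_pos_neg)
  qed
  have HHe: "HH \<alpha> \<beta> n k l h = - D / B"
    unfolding HH_def D_def B_def xr_def a_def b_def rN by (simp add: field_simps)
  have Te: "(real k + real l - real i) * (real i + real k + real l + (\<alpha> + \<beta> + 1))
            / ((real n + real l + \<alpha> - real h) * (real k - real h - 1)) = - lam / B"
    unfolding lam_def B_def xr_def a_def b_def rN rm by (simp add: field_simps)
  have FFe: "FF \<alpha> \<beta> n k l i h = pre * (1 + D / B + lam / B)"
    unfolding FF_def HHe Te pre_def xr_def by simp
  have GGe: "GG \<alpha> \<beta> n k l h * ((xr - 1) * (real h + 2) / ((real h + 2 - real k) * (real n - real h - 1)))
      = pre * (- D / B)"
  proof -
    have pp: "pochhammer (y::real) 2 = y * (y + 1)" for y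
      by (simp add: numeral_2_eq_2 pochhammer_rec')
    define u where "u = real n - real h - 1"
    define v where "v = real h + 1 - real k"
    define w where "w = xr - 1"
    define z where "z = real h + 1"
    have up: "u > 0" unfolding u_def using nh by simp
    have vp: "v > 0" unfolding v_def using hkp by simp
    have wp: "w > 0" unfolding w_def using xr2 by simp
    have zp: "z > 0" unfolding z_def by simp
    have GGu: "GG \<alpha> \<beta> n k l h = u*(u+1)*(v*(v+1)) / (w*(w+1)*(z*(z+1))) * HH \<alpha> \<beta> n k l h"
      unfolding GG_def pp u_def v_def w_def z_def xr_def by (simp add: algebra_simps)
    have M: "(xr - 1) * (real h + 2) / ((real h + 2 - real k) * (real n - real h - 1)) = w*(z+1)/((v+1)*u)"
      unfolding u_def v_def w_def z_def by (simp add: algebra_simps)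
    have pre': "pre = (u+1)*v/((w+1)*z)"
      unfolding pre_def u_def v_def w_def z_def by (simp add: algebra_simps)
    have "u*(u+1)*(v*(v+1)) / (w*(w+1)*(z*(z+1))) * (w*(z+1)/((v+1)*u)) = (u+1)*v/((w+1)*z)"
    proof -
      have "u+1 \<noteq> 0" "v+1 \<noteq> 0" "w+1 \<noteq> 0" "z+1 \<noteq> 0" "u \<noteq> 0" "v \<noteq> 0" "w \<noteq> 0" "z \<noteq> 0"
        using up vp wp zp by auto
      then show ?thesis by (simp add: divide_simps)
    qed
    then have "u*(u+1)*(v*(v+1)) / (w*(w+1)*(z*(z+1))) * HH \<alpha> \<beta> n k l h * (w*(z+1)/((v+1)*u))
        = (u+1)*v/((w+1)*z) * HH \<alpha> \<beta> n k l h"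
      by (metis mult.assoc mult.commute)
    then show ?thesis unfolding GGu M pre' HHe[symmetric] .
  qed
  have L2: "cc \<alpha> \<beta> n k l i (h+2) = K * ((xr - 1) * (real h + 2) / ((real h + 2 - real k) * (real n - real h - 1))) * Q2"
    unfolding cc2 e2 e2' K_def using xr2 nh d1p hkp by (simp add: field_simps)
  have diff: "B * (Q0 - Q1) - D * (Q1 - Q2) = lam * Q1"
    using hahn_diff[OF mN a1, of "xr - 1" b]
    unfolding B_def D_def lam_def Q0_def Q1_def Q2_def by (simp add: algebra_simps)
  have key: "Q0 = (1 + D / B + lam / B) * Q1 + (- D / B) * Q2"
  proof -
    have "B*Q0 + D*Q2 = B*Q1 + (D*Q1 + Q1*lam)" using diff by (simp add: algebra_simps)
    then have "B * (B*Q0 + D*Q2) = B*(B*Q1 + (D*Q1+Q1*lam))" by simp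
    then show ?thesis using Bnz by (simp add: field_simps)
  qed
  define M where "M = (xr - 1) * (real h + 2) / ((real h + 2 - real k) * (real n - real h - 1))"
  define X where "X = D / B"
  define Y where "Y = lam / B"
  have g: "GG \<alpha> \<beta> n k l h * (K * M * Q2) = K * Q2 * (pre * (- X))"
  proof -
    have "GG \<alpha> \<beta> n k l h * (K * M * Q2) = K * Q2 * (GG \<alpha> \<beta> n k l h * M)" by (simp only: mult_ac)
    also have "\<dots> = K * Q2 * (pre * (- X))" unfolding M_def GGe X_def by simp
    finally show ?thesis .
  qed
  have key': "Q0 = (1 + X + Y) * Q1 + (- X) * Q2" unfolding X_def Y_def using key by simp
  have "cc \<alpha> \<beta> n k l i h = K * pre * ((1 + X + Y) * Q1 + (- X) * Q2)"
    unfolding L0 key' ..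
  also have "\<dots> = pre * (1 + X + Y) * (K * Q1) + K * Q2 * (pre * (- X))"
    by (simp add: algebra_simps)
  also have "\<dots> = FF \<alpha> \<beta> n k l i h * cc \<alpha> \<beta> n k l i (h + 1) + GG \<alpha> \<beta> n k l h * cc \<alpha> \<beta> n k l i (h + 2)"
    unfolding L1 FFe g[symmetric] X_def[symmetric] Y_def[symmetric]
    by (simp only: L2 M_def[symmetric] Suc_eq_plus1 add.assoc one_add_one)
  finally show ?thesis .
qed


theorem theorem1:
  fixes n k l i :: nat and \<alpha> \<beta> :: real
  assumes "k + l \<le> n" and "\<alpha> > -1" and "\<beta> > -1"
    and "k + l \<le> i" and "i \<le> n"
  shows "(cc \<alpha> \<beta> n k l i (n - l) =
           pochhammer (\<alpha> + 2 * real l + 1) (i - k - l) / fact (i - k - l) * (1 / real (n choose l)))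
    \<and> (k + l + 1 \<le> n \<longrightarrow>
         cc \<alpha> \<beta> n k l i (n - l - 1) =
           cc \<alpha> \<beta> n k l i (n - l) * ((real n - real k - real l) * (real l + 1) / (real n - real l))
           * (1 - (real k + real l - real i) * (real i + real k + real l + (\<alpha> + \<beta> + 1))
                  / ((real k + real l - real n) * (\<alpha> + 2 * real l + 1))))
    \<and> (\<forall>h. k \<le> h \<longrightarrow> h + 2 \<le> n - l \<longrightarrow>
         cc \<alpha> \<beta> n k l i h =
           FF \<alpha> \<beta> n k l i h * cc \<alpha> \<beta> n k l i (h + 1) + GG \<alpha> \<beta> n k l h * cc \<alpha> \<beta> n k l i (h + 2))"
proof (intro conjI allI impI)
  show "cc \<alpha> \<beta> n k l i (n - l) =
           pochhammer (\<alpha> + 2 * real l + 1) (i - k - l) / fact (i - k - l) * (1 / real (n choose l))"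
    by (rule part1) (rule assms(1))
next
  assume "k + l + 1 \<le> n"
  then show "cc \<alpha> \<beta> n k l i (n - l - 1) =
           cc \<alpha> \<beta> n k l i (n - l) * ((real n - real k - real l) * (real l + 1) / (real n - real l))
           * (1 - (real k + real l - real i) * (real i + real k + real l + (\<alpha> + \<beta> + 1))
                  / ((real k + real l - real n) * (\<alpha> + 2 * real l + 1)))"
    using part2 assms by blast
next
  fix h assume "k \<le> h" "h + 2 \<le> n - l"
  then show "cc \<alpha> \<beta> n k l i h =
           FF \<alpha> \<beta> n k l i h * cc \<alpha> \<beta> n k l i (h + 1) + GG \<alpha> \<beta> n k l h * cc \<alpha> \<beta> n k l i (h + 2)"
    using part3 assms by blast
qed

end
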